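(* Let $\mathcal H=\mathbb C^4$ with orthonormal basis $|0\rangle,|1\rangle,|2\rangle,|3\rangle$, let $0<p<\tfrac12$, $|\nu^\pm\rangle=\tfrac12(\pm|0\rangle+|1\rangle\pm|2\rangle+|3\rangle)$, and $\rho_1=p|0\rangle\langle0|+(1-p)|1\rangle\langle1|$, $\rho_2=p|\nu^+\rangle\langle\nu^+|+(1-p)|\nu^-\rangle\langle\nu^-|$. Then $\rho_1$ and $\rho_2$ have the same spectrum and all Jordan angles between $\operatorname{supp}\rho_1$ and $\operatorname{supp}\rho_2$ are equal, but the set $\{\rho_1,\rho_2\}$ is not essentially pure.
   Context: $\operatorname{supp}\rho$ is the orthogonal complement of the kernel of $\rho$; Jordan angles are the principal (canonical) angles between two subspaces. A set $\mathcal M$ of density operators on $\mathcal H$ is essentially pure if there exist finite-dimensional Hilbert spaces $\mathcal H_C,\mathcal H_A,\mathcal H_B$ with $\mathcal H\otimes\mathcal H_C\cong\mathcal H_A\otimes\mathcal H_B$, density operators $\sigma_B$ on $\mathcal H_B$, $\omega_C$ on $\mathcal H_C$ and a unitary $U$ (from $\mathcal H_A\otimes\mathcal H_B$ to $\mathcal H\otimes\mathcal H_C$) such that $\{\rho\otimes\omega_C\mid\rho\in\mathcal M\}\subseteq\{U(|\phi\rangle\langle\phi|\otimes\sigma_B)U^\dagger\mid|\phi\rangle\in\mathcal H_A,\ \|\phi\|=1\}$. *)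

theory Defs
  imports "Jordan_Normal_Form.Jordan_Normal_Form" "Jordan_Normal_Form.Spectral_Radius"
    "Jordan_Normal_Form.Schur_Decomposition" "Jordan_Normal_Form.Matrix_Kernel"
begin

text \<open>Finite-dimensional Hilbert spaces are modelled as complex n-vectors
  (carrier_vec n) with inner product given by the conjugated scalar product.\<close>

definition mtrace :: "complex mat \<Rightarrow> complex" where
  "mtrace A = (\<Sum>i < dim_row A. A $$ (i,i))"

definition density_op :: "nat \<Rightarrow> complex mat \<Rightarrow> bool" where
  "density_op n \<rho> \<longleftrightarrow> \<rho> \<in> carrier_mat n n \<and> mat_adjoint \<rho> = \<rho> \<and>
     (\<forall>v \<in> carrier_vec n. 0 \<le> Re ((\<rho> *\<^sub>v v) \<bullet>c v)) \<and> mtrace \<rho> = 1"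

definition unitary_op :: "nat \<Rightarrow> complex mat \<Rightarrow> bool" where
  "unitary_op n U \<longleftrightarrow> U \<in> carrier_mat n n \<and> mat_adjoint U * U = 1\<^sub>m n \<and> U * mat_adjoint U = 1\<^sub>m n"

definition ketbra :: "complex vec \<Rightarrow> complex mat" where
  "ketbra v = mat (dim_vec v) (dim_vec v) (\<lambda>(i,j). v $ i * cnj (v $ j))"

text \<open>Kronecker (tensor) product of matrices, w.r.t. the product basis
  |i>|j> \<mapsto> index i * dimB + j.\<close>
definition kron :: "complex mat \<Rightarrow> complex mat \<Rightarrow> complex mat" where
  "kron A B = mat (dim_row A * dim_row B) (dim_col A * dim_col B)
     (\<lambda>(i,j). A $$ (i div dim_row B, j div dim_col B) * B $$ (i mod dim_row B, j mod dim_col B))"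

definition supp :: "complex mat \<Rightarrow> complex vec set" where
  "supp \<rho> = {v \<in> carrier_vec (dim_col \<rho>). \<forall>w \<in> mat_kernel \<rho>. v \<bullet>c w = 0}"

definition is_onb :: "nat \<Rightarrow> complex vec set \<Rightarrow> complex vec list \<Rightarrow> bool" where
  "is_onb n S vs \<longleftrightarrow> set vs \<subseteq> S \<and> S \<subseteq> carrier_vec n \<and>
     (\<forall>i < length vs. \<forall>j < length vs. vs ! i \<bullet>c vs ! j = (if i = j then 1 else 0)) \<and>
     (\<forall>v \<in> S. \<exists>c \<in> carrier_vec (length vs). v = mat_of_cols n vs *\<^sub>v c)"

text \<open>Jordan (principal) angles between subspaces S, T of C^n:
  with orthonormal basis matrices Q_S (n x k), Q_T (n x l) and G = Q_S^* Q_T,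
  the cosines of the min(k,l) Jordan angles are the singular values of G, i.e.
  the square roots of the eigenvalues of G G^* (if k \<le> l) resp. G^* G (if l < k).\<close>
definition jordan_angles :: "nat \<Rightarrow> complex vec set \<Rightarrow> complex vec set \<Rightarrow> real set" where
  "jordan_angles n S T =
     (let QS = mat_of_cols n (SOME vs. is_onb n S vs);
          QT = mat_of_cols n (SOME vs. is_onb n T vs);
          G = mat_adjoint QS * QT;
          M = (if dim_col QS \<le> dim_col QT then G * mat_adjoint G else mat_adjoint G * G)
      in {arccos (sqrt (Re ev)) | ev. eigenvalue M ev})"

definition essentially_pure :: "nat \<Rightarrow> complex mat set \<Rightarrow> bool" where
  "essentially_pure n \<M> \<longleftrightarrow>
     (\<exists>dC dA dB \<sigma>B \<omega>C U.
        n * dC = dA * dB \<and> density_op dB \<sigma>B \<and> density_op dC \<omega>C \<and> unitary_op (dA * dB) U \<and>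
        (\<forall>\<rho> \<in> \<M>. \<exists>\<phi> \<in> carrier_vec dA. \<phi> \<bullet>c \<phi> = 1 \<and>
            kron \<rho> \<omega>C = U * kron (ketbra \<phi>) \<sigma>B * mat_adjoint U))"

definition nu_plus :: "complex vec" where
  "nu_plus = (1/2) \<cdot>\<^sub>v vec_of_list [1, 1, 1, 1]"

definition nu_minus :: "complex vec" where
  "nu_minus = (1/2) \<cdot>\<^sub>v vec_of_list [-1, 1, -1, 1]"

definition rho1 :: "real \<Rightarrow> complex mat" where
  "rho1 p = of_real p \<cdot>\<^sub>m ketbra (unit_vec 4 0) + of_real (1 - p) \<cdot>\<^sub>m ketbra (unit_vec 4 1)"

definition rho2 :: "real \<Rightarrow> complex mat" where
  "rho2 p = of_real p \<cdot>\<^sub>m ketbra nu_plus + of_real (1 - p) \<cdot>\<^sub>m ketbra nu_minus"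

end

theory Submission
  imports Defs
begin

lemma adj_eq: "mat_adjoint (A::complex mat) = mat (dim_col A) (dim_row A) (\<lambda>(i,j). cnj (A $$ (j,i)))"
  unfolding mat_adjoint_def mat_of_rows_def by (rule eq_matI) auto

lemma adj_dims[simp]: "dim_row (mat_adjoint (A::complex mat)) = dim_col A" "dim_col (mat_adjoint A) = dim_row A"
  by (simp_all add: adj_eq)

lemma adj_index[simp]: "i < dim_col A \<Longrightarrow> j < dim_row A \<Longrightarrow> mat_adjoint (A::complex mat) $$ (i,j) = cnj (A $$ (j,i))"
  by (simp add: adj_eq)

lemma adj_carrier[simp]: "A \<in> carrier_mat n m \<Longrightarrow> mat_adjoint (A::complex mat) \<in> carrier_mat m n"
  by (intro carrier_matI) (simp_all add: carrier_matD)

lemma adj_adj[simp]: "mat_adjoint (mat_adjoint (A::complex mat)) = A"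
  by (rule eq_matI) auto

lemma adj_mult: "A \<in> carrier_mat n m \<Longrightarrow> B \<in> carrier_mat m k \<Longrightarrow>
   mat_adjoint ((A::complex mat) * B) = mat_adjoint B * mat_adjoint A"
proof (rule eq_matI)
  fix i j assume "i < dim_row (mat_adjoint B * mat_adjoint A)" "j < dim_col (mat_adjoint B * mat_adjoint A)"
  moreover assume "A \<in> carrier_mat n m" "B \<in> carrier_mat m k"
  ultimately have ij: "i < k" "j < n" and d: "dim_row A = n" "dim_col A = m" "dim_row B = m" "dim_col B = k" by auto
  have "mat_adjoint (A * B) $$ (i,j) = cnj (\<Sum>l\<in>{0..<m}. A $$ (j,l) * B $$ (l,i))"
    using ij d by (simp add: scalar_prod_def)
  also have "\<dots> = (\<Sum>l\<in>{0..<m}. cnj (B $$ (l,i)) * cnj (A $$ (j,l)))"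
    by (simp add: cnj_sum mult.commute)
  also have "\<dots> = (mat_adjoint B * mat_adjoint A) $$ (i,j)"
    using ij d by (simp add: scalar_prod_def)
  finally show "mat_adjoint (A * B) $$ (i,j) = (mat_adjoint B * mat_adjoint A) $$ (i,j)" .
qed auto

lemma adj_smult: "mat_adjoint (c \<cdot>\<^sub>m (A::complex mat)) = cnj c \<cdot>\<^sub>m mat_adjoint A"
  by (rule eq_matI) auto

lemma adj_one[simp]: "mat_adjoint (1\<^sub>m n :: complex mat) = 1\<^sub>m n"
  by (rule eq_matI) auto

lemma adj_vec: assumes "A \<in> carrier_mat n m" "v \<in> carrier_vec m" "w \<in> carrier_vec n"
  shows "((A::complex mat) *\<^sub>v v) \<bullet>c w = v \<bullet>c (mat_adjoint A *\<^sub>v w)"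
proof -
  have "((A::complex mat) *\<^sub>v v) \<bullet>c w = (\<Sum>i<n. (\<Sum>k<m. A $$ (i,k) * v $ k) * cnj (w $ i))"
    using assms by (simp add: scalar_prod_def atLeast0LessThan)
  also have "\<dots> = (\<Sum>i<n. \<Sum>k<m. v $ k * (A $$ (i,k) * cnj (w $ i)))"
    by (simp add: sum_distrib_right sum_distrib_left mult_ac)
  also have "\<dots> = (\<Sum>k<m. \<Sum>i<n. v $ k * (A $$ (i,k) * cnj (w $ i)))"
    by (rule sum.swap)
  also have "\<dots> = v \<bullet>c (mat_adjoint A *\<^sub>v w)"
    using assms by (simp add: scalar_prod_def atLeast0LessThan cnj_sum sum_distrib_left mult_ac)
  finally show ?thesis .
qed

lemma mat_eq_vec: assumes "A \<in> carrier_mat n m" "B \<in> carrier_mat n m"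
  "\<And>v. v \<in> carrier_vec m \<Longrightarrow> A *\<^sub>v v = B *\<^sub>v v"
  shows "A = (B :: 'a::semiring_1 mat)"
proof (rule eq_matI)
  fix i j assume ij: "i < dim_row B" "j < dim_col B"
  have "(A *\<^sub>v unit_vec m j) $ i = (B *\<^sub>v unit_vec m j) $ i" using assms(3)[of "unit_vec m j"] by simp
  moreover have "(A *\<^sub>v unit_vec m j) $ i = A $$ (i,j)" "(B *\<^sub>v unit_vec m j) $ i = B $$ (i,j)"
    using ij assms(1,2) by auto
  ultimately show "A $$ (i,j) = B $$ (i,j)" by simp
qed (use assms in auto)

lemma sum_prod_index: "(\<Sum>k\<in>{0..<b*d}. g k) = (\<Sum>x\<in>{0..<b}. \<Sum>y\<in>{0..<d}. g (x*d+y::nat))"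
proof (induction b)
  case 0 thus ?case by simp
next
  case (Suc b)
  have e: "{0..<Suc b * d} = {0..<b*d} \<union> {b*d..<b*d+d}" by auto
  have "(\<Sum>k\<in>{0..<Suc b*d}. g k) = (\<Sum>k\<in>{0..<b*d}. g k) + (\<Sum>k\<in>{b*d..<b*d+d}. g k)"
    unfolding e by (rule sum.union_disjoint) auto
  also have "(\<Sum>k\<in>{b*d..<b*d+d}. g k) = (\<Sum>y\<in>{0..<d}. g (y+b*d))"
    by (metis add.commute add_0 sum.shift_bounds_nat_ivl)
  also have "\<dots> = (\<Sum>y\<in>{0..<d}. g (b*d+y))" by (simp add: add.commute)
  finally show ?case by (simp add: Suc.IH)
qed

lemma kron_dims[simp]: "dim_row (kron A B) = dim_row A * dim_row B" "dim_col (kron A B) = dim_col A * dim_col B"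
  by (simp_all add: kron_def)

lemma kron_carrier[simp]: "A \<in> carrier_mat a b \<Longrightarrow> B \<in> carrier_mat c d \<Longrightarrow> kron A B \<in> carrier_mat (a*c) (b*d)"
  by (intro carrier_matI) (simp_all add: carrier_matD)

lemma kron_index: "i < dim_row A * dim_row B \<Longrightarrow> j < dim_col A * dim_col B \<Longrightarrow>
  kron A B $$ (i,j) = A $$ (i div dim_row B, j div dim_col B) * B $$ (i mod dim_row B, j mod dim_col B)"
  by (simp add: kron_def)

lemma kron_smult: "kron (c \<cdot>\<^sub>m A) B = c \<cdot>\<^sub>m kron A B"
  by (rule eq_matI) (auto simp: kron_def less_mult_imp_div_less)

lemma kron_mult: assumes A: "A \<in> carrier_mat a b" and B: "B \<in> carrier_mat c d"
  and C: "C \<in> carrier_mat b e" and D: "D \<in> carrier_mat d f"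
  shows "kron A B * kron C D = kron (A * C) (B * D)"
proof (rule eq_matI)
  fix i j assume ij: "i < dim_row (kron (A * C) (B * D))" "j < dim_col (kron (A * C) (B * D))"
  hence i: "i < a * c" and j: "j < e * f" using assms by auto
  have c0: "c > 0" using i by (cases c) auto
  have f0: "f > 0" using j by (cases f) auto
  have idc: "i div c < a" using i by (simp add: less_mult_imp_div_less)
  have jdf: "j div f < e" using j by (simp add: less_mult_imp_div_less)
  have imc: "i mod c < c" "j mod f < f" using c0 f0 by auto
  have "(kron A B * kron C D) $$ (i,j) = (\<Sum>k\<in>{0..<b*d}. kron A B $$ (i,k) * kron C D $$ (k,j))"
    using assms i j by (simp add: scalar_prod_def)
  also have "\<dots> = (\<Sum>x\<in>{0..<b}. \<Sum>y\<in>{0..<d}. kron A B $$ (i,x*d+y) * kron C D $$ (x*d+y,j))"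
    by (rule sum_prod_index)
  also have "\<dots> = (\<Sum>x\<in>{0..<b}. \<Sum>y\<in>{0..<d}. (A $$ (i div c, x) * C $$ (x, j div f)) * (B $$ (i mod c, y) * D $$ (y, j mod f)))"
  proof (intro sum.cong refl)
    fix x y assume x: "x \<in> {0..<b}" and y: "y \<in> {0..<d}"
    have xy: "x*d+y < b*d"
    proof -
      have "x*d+y < x*d+d" using y by auto
      also have "\<dots> = (x+1)*d" by simp
      also have "\<dots> \<le> b*d" using x by (intro mult_right_mono) auto
      finally show ?thesis .
    qed
    have "(x*d+y) div d = x" "(x*d+y) mod d = y" using y by auto
    thus "kron A B $$ (i,x*d+y) * kron C D $$ (x*d+y,j) = (A $$ (i div c, x) * C $$ (x, j div f)) * (B $$ (i mod c, y) * D $$ (y, j mod f))"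
      using assms i j xy by (simp add: kron_index mult_ac)
  qed
  also have "\<dots> = (\<Sum>x\<in>{0..<b}. A $$ (i div c, x) * C $$ (x, j div f)) * (\<Sum>y\<in>{0..<d}. B $$ (i mod c, y) * D $$ (y, j mod f))"
    by (simp add: sum_product)
  also have "\<dots> = kron (A * C) (B * D) $$ (i,j)"
    using assms i j idc jdf imc by (simp add: kron_index scalar_prod_def)
  finally show "(kron A B * kron C D) $$ (i,j) = kron (A * C) (B * D) $$ (i,j)" .
qed (use assms in auto)


definition outer :: "complex vec \<Rightarrow> complex vec \<Rightarrow> complex mat" where
  "outer u v = mat (dim_vec u) (dim_vec v) (\<lambda>(i,j). u $ i * cnj (v $ j))"

lemma ketbra_outer: "ketbra v = outer v v" by (simp add: ketbra_def outer_def)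

lemma outer_carrier[simp]: "outer u v \<in> carrier_mat (dim_vec u) (dim_vec v)"
  by (simp add: outer_def)

lemma outer_mult: assumes "dim_vec b = n" "dim_vec c = n"
  shows "outer a b * outer c d = (c \<bullet>c b) \<cdot>\<^sub>m outer a d"
proof (rule eq_matI)
  fix i j assume "i < dim_row ((c \<bullet>c b) \<cdot>\<^sub>m outer a d)" "j < dim_col ((c \<bullet>c b) \<cdot>\<^sub>m outer a d)"
  hence ij: "i < dim_vec a" "j < dim_vec d" by (auto simp: outer_def)
  have "(outer a b * outer c d) $$ (i,j) = (\<Sum>k\<in>{0..<n}. a $ i * cnj (b $ k) * (c $ k * cnj (d $ j)))"
    using ij assms by (simp add: outer_def scalar_prod_def)
  also have "\<dots> = (\<Sum>k\<in>{0..<n}. c $ k * cnj (b $ k)) * (a $ i * cnj (d $ j))"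
    by (simp add: sum_distrib_left sum_distrib_right mult_ac)
  also have "\<dots> = ((c \<bullet>c b) \<cdot>\<^sub>m outer a d) $$ (i,j)"
    using ij assms by (simp add: outer_def scalar_prod_def)
  finally show "(outer a b * outer c d) $$ (i,j) = ((c \<bullet>c b) \<cdot>\<^sub>m outer a d) $$ (i,j)" .
qed (auto simp: outer_def)

lemma smult_smult_m: "a \<cdot>\<^sub>m (b \<cdot>\<^sub>m A) = (a * b :: 'a::comm_ring) \<cdot>\<^sub>m A"
  by (rule eq_matI) (auto simp: mult.assoc)

lemma ketbra3: assumes "dim_vec \<phi> = n" "dim_vec \<psi> = n"
  shows "ketbra \<phi> * ketbra \<psi> * ketbra \<phi> = ((\<psi> \<bullet>c \<phi>) * (\<phi> \<bullet>c \<psi>)) \<cdot>\<^sub>m ketbra \<phi>"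
proof -
  have "ketbra \<phi> * ketbra \<psi> = (\<psi> \<bullet>c \<phi>) \<cdot>\<^sub>m outer \<phi> \<psi>"
    unfolding ketbra_outer using assms by (rule outer_mult)
  note kk = this
  have c1: "outer \<phi> \<psi> \<in> carrier_mat n n" "outer \<phi> \<phi> \<in> carrier_mat n n" using assms outer_carrier by metis+
  hence "ketbra \<phi> * ketbra \<psi> * ketbra \<phi> = (\<psi> \<bullet>c \<phi>) \<cdot>\<^sub>m (outer \<phi> \<psi> * outer \<phi> \<phi>)"
    using kk assms mult_smult_assoc_mat[OF c1] by (simp add: ketbra_outer)
  also have "outer \<phi> \<psi> * outer \<phi> \<phi> = (\<phi> \<bullet>c \<psi>) \<cdot>\<^sub>m outer \<phi> \<phi>"
    using assms by (intro outer_mult) auto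
  finally show ?thesis by (simp add: ketbra_outer smult_smult_m)
qed

lemma ketbra_carrier[simp]: "ketbra v \<in> carrier_mat (dim_vec v) (dim_vec v)"
  by (simp add: ketbra_def)

lemma conj_unitary: fixes U A B :: "complex mat" assumes U: "U \<in> carrier_mat N N" and UU: "mat_adjoint U * U = 1\<^sub>m N"
  and A: "A \<in> carrier_mat N N" and B: "B \<in> carrier_mat N N"
  shows "(U * A * mat_adjoint U) * (U * B * mat_adjoint U) = U * (A * B) * mat_adjoint U"
proof -
  have aU: "mat_adjoint U \<in> carrier_mat N N" using U by simp
  have c1: "A * mat_adjoint U \<in> carrier_mat N N" "B * mat_adjoint U \<in> carrier_mat N N"
    "U * (B * mat_adjoint U) \<in> carrier_mat N N" "A * B \<in> carrier_mat N N" "U * A \<in> carrier_mat N N"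
    "U * B \<in> carrier_mat N N" "U * (A * B) \<in> carrier_mat N N"
    using U A B aU by (auto intro!: mult_carrier_mat)
  have "(U * A * mat_adjoint U) * (U * B * mat_adjoint U) = U * (A * (mat_adjoint U * (U * (B * mat_adjoint U))))"
    using U A B aU c1 by (simp only: assoc_mult_mat[of _ N N _ N _ N])
  also have "mat_adjoint U * (U * (B * mat_adjoint U)) = (mat_adjoint U * U) * (B * mat_adjoint U)"
    using U aU c1 by (simp only: assoc_mult_mat[of _ N N _ N _ N])
  also have "\<dots> = B * mat_adjoint U" using UU c1 by (simp add: left_mult_one_mat)
  also have "U * (A * (B * mat_adjoint U)) = U * (A * B) * mat_adjoint U"
    using U A B aU c1 by (simp only: assoc_mult_mat[of _ N N _ N _ N])
  finally show ?thesis .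
qed

lemma herm_sq_zero: assumes A: "A \<in> carrier_mat n n" and h: "mat_adjoint A = A" and z: "A * A = 0\<^sub>m n n"
  shows "A = (0\<^sub>m n n :: complex mat)"
proof (rule eq_matI)
  fix i j assume ij: "i < dim_row (0\<^sub>m n n :: complex mat)" "j < dim_col (0\<^sub>m n n :: complex mat)"
  hence ij': "i < n" "j < n" by auto
  have cj: "col A j \<in> carrier_vec n" using A by auto
  have "(mat_adjoint A * A) $$ (j,j) = 0" using z h ij' by simp
  moreover have "(mat_adjoint A * A) $$ (j,j) = col A j \<bullet>c col A j"
    using A ij' by (simp add: scalar_prod_def mult.commute)
  ultimately have "col A j = 0\<^sub>v n" using cj by simp
  hence "col A j $ i = 0" using ij' by simp
  thus "A $$ (i,j) = 0\<^sub>m n n $$ (i,j)" using A ij' by simp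
qed (use A in auto)

lemma if_mult_aux: "(c::'a::semiring_1) * (if P then 1 else 0) * x = (if P then c * x else 0)" by simp

lemma eigenvalue_scalar_one: assumes "m > 0"
  shows "{f ev | ev. eigenvalue (c \<cdot>\<^sub>m 1\<^sub>m m :: complex mat) ev} = {f c}"
proof -
  have "eigenvalue (c \<cdot>\<^sub>m 1\<^sub>m m :: complex mat) ev \<longleftrightarrow> ev = c" for ev
  proof
    assume "eigenvalue (c \<cdot>\<^sub>m 1\<^sub>m m) ev"
    then obtain v where v: "v \<in> carrier_vec m" "v \<noteq> 0\<^sub>v m" "(c \<cdot>\<^sub>m 1\<^sub>m m) *\<^sub>v v = ev \<cdot>\<^sub>v v"
      unfolding eigenvalue_def eigenvector_def by auto
    have "(c \<cdot>\<^sub>m 1\<^sub>m m) *\<^sub>v v = c \<cdot>\<^sub>v v" using v(1) by (intro eq_vecI) (auto simp: scalar_prod_def if_mult_aux)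
    with v have "c \<cdot>\<^sub>v v = ev \<cdot>\<^sub>v v" by simp
    moreover obtain i where i: "i < m" "v $ i \<noteq> 0" using v(1,2) by (metis eq_vecI carrier_vecD index_zero_vec)
    ultimately have "c * v $ i = ev * v $ i" by (metis index_smult_vec(1) v(1) carrier_vecD)
    thus "ev = c" using i by simp
  next
    assume "ev = c"
    have u: "unit_vec m 0 \<in> carrier_vec m" by simp
    have nz: "unit_vec m 0 \<noteq> (0\<^sub>v m :: complex vec)"
    proof
      assume "unit_vec m 0 = (0\<^sub>v m :: complex vec)"
      hence "unit_vec m 0 $ 0 = (0\<^sub>v m :: complex vec) $ 0" by simp
      thus False using assms by simp
    qed
    have mv: "(c \<cdot>\<^sub>m 1\<^sub>m m) *\<^sub>v unit_vec m 0 = c \<cdot>\<^sub>v unit_vec m 0"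
      using u by (intro eq_vecI) (auto simp: scalar_prod_def if_mult_aux)
    have "eigenvector (c \<cdot>\<^sub>m 1\<^sub>m m) (unit_vec m 0) c"
      unfolding eigenvector_def using u nz mv by simp
    thus "eigenvalue (c \<cdot>\<^sub>m 1\<^sub>m m) ev" using \<open>ev = c\<close> unfolding eigenvalue_def by auto
  qed
  thus ?thesis by auto
qed


lemma supp_char: fixes \<rho> P A :: "complex mat"
  assumes r: "\<rho> \<in> carrier_mat n n" and P: "P \<in> carrier_mat n n" and A: "A \<in> carrier_mat n n"
  and h: "mat_adjoint P = P" and idem: "P * P = P" and rP: "\<rho> * P = \<rho>" and Ar: "A * \<rho> = P"
  shows "supp \<rho> = {v\<in>carrier_vec n. P *\<^sub>v v = v}"
proof
  show "supp \<rho> \<subseteq> {v\<in>carrier_vec n. P *\<^sub>v v = v}"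
  proof
    fix v assume "v \<in> supp \<rho>"
    hence v: "v \<in> carrier_vec n" and orth: "\<And>w. w \<in> mat_kernel \<rho> \<Longrightarrow> v \<bullet>c w = 0"
      unfolding supp_def using r by auto
    define w where "w = v - P *\<^sub>v v"
    have Pv: "P *\<^sub>v v \<in> carrier_vec n" using P v by simp
    have w: "w \<in> carrier_vec n" unfolding w_def using Pv v by simp
    have "\<rho> *\<^sub>v w = \<rho> *\<^sub>v v - \<rho> *\<^sub>v (P *\<^sub>v v)" unfolding w_def
      using r v Pv by (simp add: mult_minus_distrib_mat_vec)
    also have "\<rho> *\<^sub>v (P *\<^sub>v v) = \<rho> *\<^sub>v v" using r P v rP by (metis assoc_mult_mat_vec)
    finally have "\<rho> *\<^sub>v w = 0\<^sub>v n" using r v by simp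
    hence wk: "w \<in> mat_kernel \<rho>" using r w by (intro mat_kernelI) auto
    have "P *\<^sub>v w = P *\<^sub>v v - P *\<^sub>v (P *\<^sub>v v)" unfolding w_def
      using P v Pv by (simp add: mult_minus_distrib_mat_vec)
    also have "P *\<^sub>v (P *\<^sub>v v) = P *\<^sub>v v" using P v idem by (metis assoc_mult_mat_vec)
    finally have Pw: "P *\<^sub>v w = 0\<^sub>v n" using P v by simp
    have "(P *\<^sub>v v) \<bullet>c w = v \<bullet>c (mat_adjoint P *\<^sub>v w)" using P v w by (rule adj_vec)
    also have "\<dots> = 0" using h Pw v by simp
    finally have "(P *\<^sub>v v) \<bullet>c w = 0" .
    moreover have "v \<bullet>c w = 0" using orth wk .
    moreover have "w \<bullet>c w = v \<bullet>c w - (P *\<^sub>v v) \<bullet>c w"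
      unfolding w_def using v Pv w by (simp add: minus_scalar_prod_distrib[of _ n])
    ultimately have "w \<bullet>c w = 0" by simp
    hence "w = 0\<^sub>v n" using w by simp
    hence w0: "w = 0\<^sub>v n" .
    have "P *\<^sub>v v = v"
    proof (rule eq_vecI)
      fix i assume i: "i < dim_vec v"
      have "w $ i = 0" using w0 i v by simp
      moreover have "dim_vec (P *\<^sub>v v) = n" using P by simp
      ultimately show "(P *\<^sub>v v) $ i = v $ i" using i v unfolding w_def by (simp add: carrier_vecD)
    qed (use P v in simp)
    thus "v \<in> {v\<in>carrier_vec n. P *\<^sub>v v = v}" using v by simp
  qed
next
  show "{v\<in>carrier_vec n. P *\<^sub>v v = v} \<subseteq> supp \<rho>"
  proof
    fix v assume "v \<in> {v\<in>carrier_vec n. P *\<^sub>v v = v}"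
    hence v: "v \<in> carrier_vec n" and Pv: "P *\<^sub>v v = v" by auto
    have "v \<bullet>c w = 0" if wk: "w \<in> mat_kernel \<rho>" for w
    proof -
      have w: "w \<in> carrier_vec n" and rw: "\<rho> *\<^sub>v w = 0\<^sub>v n" using wk r unfolding mat_kernel_def by auto
      have "v \<bullet>c w = (P *\<^sub>v v) \<bullet>c w" using Pv by simp
      also have "\<dots> = v \<bullet>c (mat_adjoint P *\<^sub>v w)" using P v w by (rule adj_vec)
      also have "mat_adjoint P *\<^sub>v w = A *\<^sub>v (\<rho> *\<^sub>v w)" using h Ar A r w by (metis assoc_mult_mat_vec)
      also have "\<dots> = 0\<^sub>v n" unfolding rw using A by (intro eq_vecI) (auto simp: carrier_matD)
      finally show ?thesis using v by simp
    qed
    thus "v \<in> supp \<rho>" unfolding supp_def using r v by auto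
  qed
qed


lemma moc_index: "i < n \<Longrightarrow> k < length vs \<Longrightarrow> mat_of_cols n vs $$ (i,k) = vs ! k $ i"
  by (simp add: mat_of_cols_def)

lemma adj_moc_carrier[simp]: "mat_adjoint (mat_of_cols n (vs :: complex vec list)) \<in> carrier_mat (length vs) n"
  using adj_carrier[OF mat_of_cols_carrier(1)] .

lemma adjQQ: fixes vs :: "complex vec list" assumes vs: "set vs \<subseteq> carrier_vec n" and i: "i < length vs" and j: "j < length vs"
  shows "(mat_adjoint (mat_of_cols n vs) * mat_of_cols n vs) $$ (j,i) = vs ! i \<bullet>c vs ! j"
proof -
  have ci: "vs ! i \<in> carrier_vec n" "vs ! j \<in> carrier_vec n" using vs i j by auto
  have "(mat_adjoint (mat_of_cols n vs) * mat_of_cols n vs) $$ (j,i) =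
     (\<Sum>k\<in>{0..<n}. cnj (vs ! j $ k) * vs ! i $ k)"
    using i j by (simp add: scalar_prod_def moc_index)
  also have "\<dots> = vs ! i \<bullet>c vs ! j" using ci by (simp add: scalar_prod_def mult.commute)
  finally show ?thesis .
qed

lemma Q_unit: fixes vs :: "complex vec list" assumes vs: "set vs \<subseteq> carrier_vec n" and k: "k < length vs"
  shows "mat_of_cols n vs *\<^sub>v unit_vec (length vs) k = vs ! k"
proof -
  have ck: "vs ! k \<in> carrier_vec n" using vs k by auto
  show ?thesis
  proof (rule eq_vecI)
    fix i assume "i < dim_vec (vs ! k)"
    hence i: "i < n" using ck by simp
    have "(mat_of_cols n vs *\<^sub>v unit_vec (length vs) k) $ i = row (mat_of_cols n vs) i $ k"
      using i k by simp
    also have "\<dots> = vs ! k $ i" using i k by (simp add: moc_index)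
    finally show "(mat_of_cols n vs *\<^sub>v unit_vec (length vs) k) $ i = vs ! k $ i" .
  qed (use ck in simp)
qed

lemma onb_exists: fixes P :: "complex mat" and vs :: "complex vec list"
  assumes vs: "set vs \<subseteq> carrier_vec n" and P: "P \<in> carrier_mat n n"
  and QQ: "mat_adjoint (mat_of_cols n vs) * mat_of_cols n vs = 1\<^sub>m (length vs)"
  and QP: "mat_of_cols n vs * mat_adjoint (mat_of_cols n vs) = P"
  shows "is_onb n {v\<in>carrier_vec n. P *\<^sub>v v = v} vs"
proof -
  let ?Q = "mat_of_cols n vs"
  have Q: "?Q \<in> carrier_mat n (length vs)" by simp
  have aQ: "mat_adjoint ?Q \<in> carrier_mat (length vs) n" by simp
  have "x \<in> {v\<in>carrier_vec n. P *\<^sub>v v = v}" if x: "x \<in> set vs" for x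
  proof -
    obtain k where k: "k < length vs" "x = vs ! k" using x by (auto simp: in_set_conv_nth)
    have u: "unit_vec (length vs) k \<in> carrier_vec (length vs)" by simp
    have "P *\<^sub>v x = ?Q *\<^sub>v (mat_adjoint ?Q *\<^sub>v (?Q *\<^sub>v unit_vec (length vs) k))"
      using Q_unit[OF vs k(1)] k QP Q aQ u by (metis assoc_mult_mat_vec mult_mat_vec_carrier)
    also have "\<dots> = ?Q *\<^sub>v unit_vec (length vs) k"
      using QQ Q aQ u by (metis assoc_mult_mat_vec one_mult_mat_vec)
    also have "\<dots> = x" using Q_unit[OF vs k(1)] k by simp
    finally show ?thesis using x vs by auto
  qed
  moreover have "\<forall>i < length vs. \<forall>j < length vs. vs ! i \<bullet>c vs ! j = (if i = j then 1 else 0)"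
  proof (intro allI impI)
    fix i j assume i: "i < length vs" and j: "j < length vs"
    have "vs ! i \<bullet>c vs ! j = (mat_adjoint ?Q * ?Q) $$ (j,i)" using adjQQ[OF vs i j] by simp
    also have "\<dots> = (if i = j then 1 else 0)" using QQ i j by auto
    finally show "vs ! i \<bullet>c vs ! j = (if i = j then 1 else 0)" .
  qed
  moreover have "\<exists>c \<in> carrier_vec (length vs). v = ?Q *\<^sub>v c" if v: "v \<in> {v\<in>carrier_vec n. P *\<^sub>v v = v}" for v
  proof
    have vc: "v \<in> carrier_vec n" and Pv: "P *\<^sub>v v = v" using v by auto
    show "mat_adjoint ?Q *\<^sub>v v \<in> carrier_vec (length vs)" by (rule mult_mat_vec_carrier[OF aQ vc])
    show "v = ?Q *\<^sub>v (mat_adjoint ?Q *\<^sub>v v)" using Pv QP Q aQ vc by (metis assoc_mult_mat_vec)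
  qed
  ultimately show ?thesis unfolding is_onb_def by auto
qed

lemma onb_props: fixes P :: "complex mat"
  assumes P: "P \<in> carrier_mat n n" and h: "mat_adjoint P = P" and idem: "P * P = P"
  and onb: "is_onb n {v\<in>carrier_vec n. P *\<^sub>v v = v} vs"
  shows "mat_adjoint (mat_of_cols n vs) * mat_of_cols n vs = 1\<^sub>m (length vs)"
    "P * mat_of_cols n vs = mat_of_cols n vs"
    "mat_of_cols n vs * mat_adjoint (mat_of_cols n vs) = P"
proof -
  let ?Q = "mat_of_cols n vs"
  have Q: "?Q \<in> carrier_mat n (length vs)" by simp
  have aQ: "mat_adjoint ?Q \<in> carrier_mat (length vs) n" by simp
  have sv: "set vs \<subseteq> {v\<in>carrier_vec n. P *\<^sub>v v = v}" and
    on: "\<forall>i < length vs. \<forall>j < length vs. vs ! i \<bullet>c vs ! j = (if i = j then 1 else 0)" and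
    sp: "\<And>v. v \<in> {v\<in>carrier_vec n. P *\<^sub>v v = v} \<Longrightarrow> \<exists>c \<in> carrier_vec (length vs). v = ?Q *\<^sub>v c"
    using onb unfolding is_onb_def by auto
  have vs: "set vs \<subseteq> carrier_vec n" using sv by auto
  show QQ: "mat_adjoint ?Q * ?Q = 1\<^sub>m (length vs)"
  proof (rule eq_matI)
    fix j i assume "j < dim_row (1\<^sub>m (length vs) :: complex mat)" "i < dim_col (1\<^sub>m (length vs) :: complex mat)"
    hence j: "j < length vs" and i: "i < length vs" by auto
    show "(mat_adjoint ?Q * ?Q) $$ (j,i) = 1\<^sub>m (length vs) $$ (j,i)"
      using adjQQ[OF vs i j] on i j by auto
  qed auto
  show PQ: "P * ?Q = ?Q"
  proof (rule eq_matI)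
    fix i k assume "i < dim_row ?Q" "k < dim_col ?Q"
    hence i: "i < n" and k: "k < length vs" by auto
    have "vs ! k \<in> set vs" using k by simp
    hence Pk: "P *\<^sub>v vs ! k = vs ! k" using sv by auto
    have "(P * ?Q) $$ (i,k) = (P *\<^sub>v col ?Q k) $ i" using P i k by simp
    also have "col ?Q k = vs ! k" using k vs by (intro col_mat_of_cols) auto
    finally show "(P * ?Q) $$ (i,k) = ?Q $$ (i,k)" using Pk i k by (simp add: moc_index)
  qed (use P in auto)
  have aQP: "mat_adjoint ?Q * P = mat_adjoint ?Q"
    using adj_mult[OF P Q] PQ h by simp
  show "?Q * mat_adjoint ?Q = P"
  proof (rule mat_eq_vec[of _ n n])
    show "?Q * mat_adjoint ?Q \<in> carrier_mat n n" by (rule mult_carrier_mat[OF Q aQ])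
    show "P \<in> carrier_mat n n" by (rule P)
    fix v :: "complex vec" assume v: "v \<in> carrier_vec n"
    have Pv: "P *\<^sub>v v \<in> carrier_vec n" using P v by simp
    have "P *\<^sub>v (P *\<^sub>v v) = P *\<^sub>v v" using idem P v by (metis assoc_mult_mat_vec)
    then obtain c where c: "c \<in> carrier_vec (length vs)" "P *\<^sub>v v = ?Q *\<^sub>v c"
      using sp[of "P *\<^sub>v v"] Pv by auto
    have "(?Q * mat_adjoint ?Q) *\<^sub>v v = ?Q *\<^sub>v (mat_adjoint ?Q *\<^sub>v v)" by (rule assoc_mult_mat_vec[OF Q aQ v])
    also have "mat_adjoint ?Q *\<^sub>v v = (mat_adjoint ?Q * P) *\<^sub>v v" using aQP by simp
    also have "\<dots> = mat_adjoint ?Q *\<^sub>v (P *\<^sub>v v)" by (rule assoc_mult_mat_vec[OF aQ P v])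
    also have "P *\<^sub>v v = ?Q *\<^sub>v c" by (rule c(2))
    also have "mat_adjoint ?Q *\<^sub>v (?Q *\<^sub>v c) = c" using QQ c assoc_mult_mat_vec[OF aQ Q c(1)] by simp
    finally show "(?Q * mat_adjoint ?Q) *\<^sub>v v = P *\<^sub>v v" using c by simp
  qed
qed


lemma GG_scalar: fixes P1 P2 Q1 Q2 :: "complex mat"
  assumes P1: "P1 \<in> carrier_mat n n" and P2: "P2 \<in> carrier_mat n n"
  and h1: "mat_adjoint P1 = P1"
  and Q1: "Q1 \<in> carrier_mat n k" and Q2: "Q2 \<in> carrier_mat n l"
  and QQ1: "mat_adjoint Q1 * Q1 = 1\<^sub>m k" and PQ1: "P1 * Q1 = Q1"
  and QQ2: "Q2 * mat_adjoint Q2 = P2"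
  and PPP: "P1 * P2 * P1 = c \<cdot>\<^sub>m P1"
  shows "(mat_adjoint Q1 * Q2) * mat_adjoint (mat_adjoint Q1 * Q2) = c \<cdot>\<^sub>m 1\<^sub>m k"
proof -
  have aQ1: "mat_adjoint Q1 \<in> carrier_mat k n" using Q1 by simp
  have aQ2: "mat_adjoint Q2 \<in> carrier_mat l n" using Q2 by simp
  have aQP: "mat_adjoint Q1 * P1 = mat_adjoint Q1" using adj_mult[OF P1 Q1] PQ1 h1 by simp
  have "mat_adjoint (mat_adjoint Q1 * Q2) = mat_adjoint Q2 * Q1" using adj_mult[OF aQ1 Q2] by simp
  hence "(mat_adjoint Q1 * Q2) * mat_adjoint (mat_adjoint Q1 * Q2) = (mat_adjoint Q1 * Q2) * (mat_adjoint Q2 * Q1)" by simp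
  also have "\<dots> = mat_adjoint Q1 * (Q2 * (mat_adjoint Q2 * Q1))"
    by (rule assoc_mult_mat[OF aQ1 Q2 mult_carrier_mat[OF aQ2 Q1]])
  also have "\<dots> = mat_adjoint Q1 * ((Q2 * mat_adjoint Q2) * Q1)"
    using assoc_mult_mat[OF Q2 aQ2 Q1] by simp
  also have "\<dots> = mat_adjoint Q1 * (P2 * Q1)" using QQ2 by simp
  also have "\<dots> = (mat_adjoint Q1 * P1) * (P2 * (P1 * Q1))" using aQP PQ1 by simp
  also have "\<dots> = mat_adjoint Q1 * (P1 * (P2 * (P1 * Q1)))"
    by (rule assoc_mult_mat[OF aQ1 P1 mult_carrier_mat[OF P2 mult_carrier_mat[OF P1 Q1]]])
  also have "\<dots> = mat_adjoint Q1 * ((P1 * P2 * P1) * Q1)"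
    using assoc_mult_mat[OF mult_carrier_mat[OF P1 P2] P1 Q1] assoc_mult_mat[OF P1 P2 mult_carrier_mat[OF P1 Q1]] by simp
  also have "\<dots> = mat_adjoint Q1 * (c \<cdot>\<^sub>m (P1 * Q1))" using PPP mult_smult_assoc_mat[OF P1 Q1] by simp
  also have "\<dots> = c \<cdot>\<^sub>m (mat_adjoint Q1 * Q1)" using PQ1 mult_smult_distrib[OF aQ1 Q1] by simp
  also have "\<dots> = c \<cdot>\<^sub>m 1\<^sub>m k" using QQ1 by simp
  finally show ?thesis .
qed


lemma len_pos: fixes P :: "complex mat" and vs :: "complex vec list"
  assumes "mat_of_cols n vs * mat_adjoint (mat_of_cols n vs) = P" and "P \<noteq> 0\<^sub>m n n"
  shows "length vs > 0"
proof (rule ccontr)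
  assume "\<not> length vs > 0"
  hence "vs = []" by simp
  hence "mat_of_cols n vs * mat_adjoint (mat_of_cols n vs) = 0\<^sub>m n n"
    by (intro eq_matI) (auto simp: scalar_prod_def)
  thus False using assms by simp
qed

lemma jordan_generic: fixes P1 P2 :: "complex mat" and c :: complex
  assumes P1: "P1 \<in> carrier_mat n n" and P2: "P2 \<in> carrier_mat n n"
  and h1: "mat_adjoint P1 = P1" and h2: "mat_adjoint P2 = P2"
  and i1: "P1 * P1 = P1" and i2: "P2 * P2 = P2"
  and PPP1: "P1 * P2 * P1 = c \<cdot>\<^sub>m P1" and PPP2: "P2 * P1 * P2 = c \<cdot>\<^sub>m P2"
  and ex1: "\<exists>vs. is_onb n {v\<in>carrier_vec n. P1 *\<^sub>v v = v} vs"
  and ex2: "\<exists>vs. is_onb n {v\<in>carrier_vec n. P2 *\<^sub>v v = v} vs"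
  and nz1: "P1 \<noteq> 0\<^sub>m n n" and nz2: "P2 \<noteq> 0\<^sub>m n n"
  shows "jordan_angles n {v\<in>carrier_vec n. P1 *\<^sub>v v = v} {v\<in>carrier_vec n. P2 *\<^sub>v v = v} = {arccos (sqrt (Re c))}"
proof -
  define vs1 where "vs1 = (SOME vs. is_onb n {v\<in>carrier_vec n. P1 *\<^sub>v v = v} vs)"
  define vs2 where "vs2 = (SOME vs. is_onb n {v\<in>carrier_vec n. P2 *\<^sub>v v = v} vs)"
  have o1: "is_onb n {v\<in>carrier_vec n. P1 *\<^sub>v v = v} vs1" unfolding vs1_def using someI_ex[OF ex1] .
  have o2: "is_onb n {v\<in>carrier_vec n. P2 *\<^sub>v v = v} vs2" unfolding vs2_def using someI_ex[OF ex2] .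
  define Q1 where "Q1 = mat_of_cols n vs1"
  define Q2 where "Q2 = mat_of_cols n vs2"
  note pr1 = onb_props[OF P1 h1 i1 o1, folded Q1_def]
  note pr2 = onb_props[OF P2 h2 i2 o2, folded Q2_def]
  have Q1: "Q1 \<in> carrier_mat n (length vs1)" and Q2: "Q2 \<in> carrier_mat n (length vs2)"
    unfolding Q1_def Q2_def by simp_all
  have k: "length vs1 > 0" using len_pos[OF pr1(3)[unfolded Q1_def] nz1] .
  have l: "length vs2 > 0" using len_pos[OF pr2(3)[unfolded Q2_def] nz2] .
  have M1: "(mat_adjoint Q1 * Q2) * mat_adjoint (mat_adjoint Q1 * Q2) = c \<cdot>\<^sub>m 1\<^sub>m (length vs1)"
    by (rule GG_scalar[OF P1 P2 h1 Q1 Q2 pr1(1) pr1(2) pr2(3) PPP1])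
  have M2: "(mat_adjoint Q2 * Q1) * mat_adjoint (mat_adjoint Q2 * Q1) = c \<cdot>\<^sub>m 1\<^sub>m (length vs2)"
    by (rule GG_scalar[OF P2 P1 h2 Q2 Q1 pr2(1) pr2(2) pr1(3) PPP2])
  have aQ1: "mat_adjoint Q1 \<in> carrier_mat (length vs1) n" using Q1 by simp
  have adjG: "mat_adjoint (mat_adjoint Q1 * Q2) = mat_adjoint Q2 * Q1" using adj_mult[OF aQ1 Q2] by simp
  have M2': "mat_adjoint (mat_adjoint Q1 * Q2) * (mat_adjoint Q1 * Q2) = c \<cdot>\<^sub>m 1\<^sub>m (length vs2)"
    using M2 adjG adj_mult[OF adj_carrier[OF Q2] Q1] by simp
  have dQ: "dim_col Q1 = length vs1" "dim_col Q2 = length vs2" using Q1 Q2 by auto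
  show ?thesis
  proof (cases "length vs1 \<le> length vs2")
    case True
    thus ?thesis unfolding jordan_angles_def Let_def
      using eigenvalue_scalar_one[OF k, of "\<lambda>ev. arccos (sqrt (Re ev))" c] M1 dQ
      by (simp add: vs1_def[symmetric] vs2_def[symmetric] Q1_def[symmetric] Q2_def[symmetric])
  next
    case False
    thus ?thesis unfolding jordan_angles_def Let_def
      using eigenvalue_scalar_one[OF l, of "\<lambda>ev. arccos (sqrt (Re ev))" c] M2' dQ
      by (simp add: vs1_def[symmetric] vs2_def[symmetric] Q1_def[symmetric] Q2_def[symmetric])
  qed
qed


lemma less4: "(i::nat) < 4 \<longleftrightarrow> i = 0 \<or> i = 1 \<or> i = 2 \<or> i = 3" by auto
lemma less2: "(i::nat) < 2 \<longleftrightarrow> i = 0 \<or> i = 1" by auto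

lemma sum4: "(\<Sum>i\<in>{0..<4::nat}. f i) = f 0 + f 1 + f 2 + f 3"
  by (simp add: eval_nat_numeral)
lemma sum2: "(\<Sum>i\<in>{0..<2::nat}. f i) = f 0 + f 1"
  by (simp add: eval_nat_numeral)

lemma mult4: "A \<in> carrier_mat 4 4 \<Longrightarrow> B \<in> carrier_mat 4 4 \<Longrightarrow> i < 4 \<Longrightarrow> j < 4 \<Longrightarrow>
  (A * B) $$ (i,j) = A$$(i,0)*B$$(0,j) + A$$(i,1)*B$$(1,j) + A$$(i,2)*B$$(2,j) + A$$(i,3)*B$$(3,j)"
  by (simp add: scalar_prod_def sum4)

lemma mult4_mat: "A \<in> carrier_mat 4 4 \<Longrightarrow> B \<in> carrier_mat 4 4 \<Longrightarrow>
  A * B = mat 4 4 (\<lambda>(i,j). A$$(i,0)*B$$(0,j) + A$$(i,1)*B$$(1,j) + A$$(i,2)*B$$(2,j) + A$$(i,3)*B$$(3,j))"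
  by (rule eq_matI) (auto simp: scalar_prod_def sum4)

lemma carrier44[simp]: "A \<in> carrier_mat 4 4 \<Longrightarrow> B \<in> carrier_mat 4 4 \<Longrightarrow> A * B \<in> carrier_mat 4 4"
  by (rule mult_carrier_mat)

lemma nup_e: "nu_plus = vec 4 (\<lambda>i. 1/2)"
  by (rule eq_vecI) (auto simp: nu_plus_def less4 vec_of_list_index simp del: vec_of_list_Cons)

lemma num_e: "nu_minus = vec 4 (\<lambda>i. if even i then -1/2 else 1/2)"
  by (rule eq_vecI) (auto simp: nu_minus_def less4 vec_of_list_index simp del: vec_of_list_Cons)

lemma rho1_e: "rho1 p = mat 4 4 (\<lambda>(i,j). if i = 0 \<and> j = 0 then complex_of_real p else if i = 1 \<and> j = 1 then complex_of_real (1-p) else 0)"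
  by (auto simp: rho1_def ketbra_def less4)

lemma rho2_e: "rho2 p = mat 4 4 (\<lambda>(i,j). if even i = even j then 1/4 else (2*complex_of_real p - 1)/4)"
  apply (rule eq_matI)
  apply (auto simp: rho2_def ketbra_def nup_e num_e less4)
  apply (auto simp: field_simps)
  done

definition P1 :: "complex mat" where "P1 = mat 4 4 (\<lambda>(i,j). if i = j \<and> i < 2 then 1 else 0)"
definition P2 :: "complex mat" where "P2 = mat 4 4 (\<lambda>(i,j). if even i = even j then 1/2 else 0)"

lemma P1c[simp]: "P1 \<in> carrier_mat 4 4" by (simp add: P1_def)
lemma P2c[simp]: "P2 \<in> carrier_mat 4 4" by (simp add: P2_def)
lemma rho1c[simp]: "rho1 p \<in> carrier_mat 4 4" by (simp add: rho1_e)
lemma rho2c[simp]: "rho2 p \<in> carrier_mat 4 4" by (simp add: rho2_e)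

lemma P1h: "mat_adjoint P1 = P1" by (rule eq_matI) (auto simp: P1_def)
lemma P2h: "mat_adjoint P2 = P2" by (rule eq_matI) (auto simp: P2_def)
lemma P1i: "P1 * P1 = P1" unfolding P1_def by (simp add: mult4_mat) (rule eq_matI, auto simp: less4)
lemma P2i: "P2 * P2 = P2" unfolding P2_def by (simp add: mult4_mat) (rule eq_matI, auto simp: less4)
lemma P121: "P1 * P2 * P1 = (1/2) \<cdot>\<^sub>m P1" unfolding P1_def P2_def by (simp add: mult4_mat) (rule eq_matI, auto simp: less4)
lemma P212: "P2 * P1 * P2 = (1/2) \<cdot>\<^sub>m P2" unfolding P1_def P2_def by (simp add: mult4_mat) (rule eq_matI, auto simp: less4)

lemma rP1: "rho1 p * P1 = rho1 p"
  unfolding P1_def rho1_e by (simp add: mult4_mat) (rule eq_matI, auto simp: less4)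
lemma rP2: "rho2 p * P2 = rho2 p"
  unfolding P2_def rho2_e by (simp add: mult4_mat) (rule eq_matI, auto simp: less4 field_simps)

definition A1 :: "real \<Rightarrow> complex mat" where
  "A1 p = mat 4 4 (\<lambda>(i,j). if i = 0 \<and> j = 0 then 1 / complex_of_real p else if i = 1 \<and> j = 1 then 1 / complex_of_real (1-p) else 0)"
definition A2 :: "real \<Rightarrow> complex mat" where
  "A2 p = mat 4 4 (\<lambda>(i,j). (1 / complex_of_real p + (if even i = even j then 1 else -1) / complex_of_real (1-p)) / 4)"

lemma A1c[simp]: "A1 p \<in> carrier_mat 4 4" by (simp add: A1_def)
lemma A2c[simp]: "A2 p \<in> carrier_mat 4 4" by (simp add: A2_def)

lemma A1r: assumes "0 < p" "p < 1" shows "A1 p * rho1 p = P1"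
proof -
  have "complex_of_real p \<noteq> 0" "complex_of_real (1-p) \<noteq> 0" using assms by auto
  thus ?thesis unfolding P1_def rho1_e A1_def by (simp add: mult4_mat) (rule eq_matI, auto simp: less4)
qed

lemma A2r_gen: fixes a b x y :: complex assumes ax: "a * x = 1" and hb: "b * y = 1"
  shows "mat 4 4 (\<lambda>(i,j). (a + (if even i = even j then 1 else -1) * b) / 4) *
         mat 4 4 (\<lambda>(i,j). (x + (if even i = even j then 1 else -1) * y) / 4) = P2"
proof -
  have ax': "a * (x * z) = z" "b * (y * z) = z" for z using ax hb by (simp_all add: mult.assoc[symmetric])
  show ?thesis unfolding P2_def apply (simp add: mult4_mat) apply (rule eq_matI) apply (auto simp: less4)
  apply (simp_all add: field_simps)
  apply (simp_all add: algebra_simps ax hb ax')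
  done
qed

lemma rho2_e2: "rho2 p = mat 4 4 (\<lambda>(i,j). (complex_of_real p + (if even i = even j then 1 else -1) * complex_of_real (1-p)) / 4)"
  unfolding rho2_e by (rule eq_matI) auto

lemma A2r: assumes "0 < p" "p < 1" shows "A2 p * rho2 p = P2"
proof -
  have "complex_of_real p \<noteq> 0" "complex_of_real (1-p) \<noteq> 0" using assms by auto
  hence h: "1 / complex_of_real p * complex_of_real p = 1" "1 / complex_of_real (1-p) * complex_of_real (1-p) = 1" by auto
  have "A2 p = mat 4 4 (\<lambda>(i,j). (1 / complex_of_real p + (if even i = even j then 1 else -1) * (1 / complex_of_real (1-p))) / 4)"
    unfolding A2_def by (rule eq_matI) auto
  thus ?thesis unfolding rho2_e2 using A2r_gen[OF h] by simp
qed

lemma P1nz: "P1 \<noteq> 0\<^sub>m 4 4"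
proof
  assume "P1 = 0\<^sub>m 4 4" hence "P1 $$ (0,0) = 0\<^sub>m 4 4 $$ (0,0)" by simp
  thus False by (simp add: P1_def)
qed
lemma P2nz: "P2 \<noteq> 0\<^sub>m 4 4"
proof
  assume "P2 = 0\<^sub>m 4 4" hence "P2 $$ (0,0) = 0\<^sub>m 4 4 $$ (0,0)" by simp
  thus False by (simp add: P2_def)
qed


definition vs1 :: "complex vec list" where "vs1 = [unit_vec 4 0, unit_vec 4 1]"
definition vs2 :: "complex vec list" where "vs2 = [nu_plus, nu_minus]"

lemma Q1_e: "mat_of_cols 4 vs1 = mat 4 2 (\<lambda>(i,j). if i = j then 1 else 0)"
  by (rule eq_matI) (auto simp: vs1_def mat_of_cols_def less2)
lemma Q2_e: "mat_of_cols 4 vs2 = mat 4 2 (\<lambda>(i,j). if j = 0 then 1/2 else if even i then -1/2 else 1/2)"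
  by (rule eq_matI) (auto simp: vs2_def mat_of_cols_def less2 nup_e num_e)

lemma vs1c: "set vs1 \<subseteq> carrier_vec 4" by (auto simp: vs1_def)
lemma vs2c: "set vs2 \<subseteq> carrier_vec 4" by (auto simp: vs2_def nup_e num_e)

lemma len1: "length vs1 = 2" by (simp add: vs1_def)
lemma len2: "length vs2 = 2" by (simp add: vs2_def)

lemma QQ1: "mat_adjoint (mat_of_cols 4 vs1) * mat_of_cols 4 vs1 = 1\<^sub>m (length vs1)"
  unfolding Q1_e len1 by (rule eq_matI) (auto simp: less2 scalar_prod_def sum4)
lemma QQ2: "mat_adjoint (mat_of_cols 4 vs2) * mat_of_cols 4 vs2 = 1\<^sub>m (length vs2)"
  unfolding Q2_e len2 by (rule eq_matI) (auto simp: less2 scalar_prod_def sum4)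
lemma QP1: "mat_of_cols 4 vs1 * mat_adjoint (mat_of_cols 4 vs1) = P1"
  unfolding Q1_e P1_def by (rule eq_matI) (auto simp: less4 scalar_prod_def sum2)
lemma QP2: "mat_of_cols 4 vs2 * mat_adjoint (mat_of_cols 4 vs2) = P2"
  unfolding Q2_e P2_def by (rule eq_matI) (auto simp: less4 scalar_prod_def sum2)

definition V :: "complex mat" where
  "V = mat 4 4 (\<lambda>(i,j). [[1/2,-1/2,1,0], [1/2,1/2,0,1], [1/2,-1/2,-1,0], [1/2,1/2,0,-1]] ! i ! j)"
definition W :: "complex mat" where
  "W = mat 4 4 (\<lambda>(i,j). [[1/2,1/2,1/2,1/2],[-1/2,1/2,-1/2,1/2],[1/2,0,-1/2,0],[0,1/2,0,-1/2]] ! i ! j)"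

lemma Vc[simp]: "V \<in> carrier_mat 4 4" by (simp add: V_def)
lemma Wc[simp]: "W \<in> carrier_mat 4 4" by (simp add: W_def)

lemma VW: "V * W = 1\<^sub>m 4"
  unfolding V_def W_def by (simp add: mult4_mat) (rule eq_matI, auto simp: less4)
lemma WV: "W * V = 1\<^sub>m 4"
  unfolding V_def W_def by (simp add: mult4_mat) (rule eq_matI, auto simp: less4)
lemma VrW: "rho2 p = V * rho1 p * W"
  unfolding V_def W_def rho1_e rho2_e by (simp add: mult4_mat) (rule eq_matI, auto simp: less4 field_simps)

lemma entry121: "(rho1 p * rho2 p * rho1 p) $$ (0,1) = complex_of_real p * complex_of_real (1-p) * (2*complex_of_real p - 1)/4"
  unfolding rho1_e rho2_e by (simp add: mult4_mat)
lemma entry111: "(rho1 p * rho1 p * rho1 p) $$ (0,1) = 0"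
  unfolding rho1_e by (simp add: mult4_mat)


lemma smult_one_m: "(1::complex) \<cdot>\<^sub>m A = A" by (rule eq_matI) auto

theorem mainTheorem9:
  fixes p :: real
  assumes "0 < p" and "p < 1/2"
  shows "spectrum (rho1 p) = spectrum (rho2 p) \<and> char_poly (rho1 p) = char_poly (rho2 p)
     \<and> (\<exists>\<theta>. jordan_angles 4 (supp (rho1 p)) (supp (rho2 p)) = {\<theta>})
     \<and> \<not> essentially_pure 4 {rho1 p, rho2 p}"
proof (intro conjI)
  have p1: "p < 1" using assms by simp
  have sim: "similar_mat (rho2 p) (rho1 p)"
    unfolding similar_mat_def similar_mat_wit_def
    apply (rule exI[of _ V], rule exI[of _ W])
    proof -
      have "dim_row (rho2 p) = 4" by (simp add: rho2_e)
      thus "let n = dim_row (rho2 p) in {rho2 p, rho1 p, V, W} \<subseteq> carrier_mat n n \<and> V * W = 1\<^sub>m n \<and> W * V = 1\<^sub>m n \<and> rho2 p = V * rho1 p * W"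
        by (simp add: VW WV VrW[symmetric])
    qed
  show cp: "char_poly (rho1 p) = char_poly (rho2 p)" using char_poly_similar[OF sim] by simp
  show "spectrum (rho1 p) = spectrum (rho2 p)"
    unfolding spectrum_def using eigenvalue_root_char_poly[OF rho1c, of p] eigenvalue_root_char_poly[OF rho2c, of p] cp
    by auto
  have s1: "supp (rho1 p) = {v\<in>carrier_vec 4. P1 *\<^sub>v v = v}"
    by (rule supp_char[OF rho1c P1c A1c P1h P1i rP1 A1r[OF assms(1) p1]])
  have s2: "supp (rho2 p) = {v\<in>carrier_vec 4. P2 *\<^sub>v v = v}"
    by (rule supp_char[OF rho2c P2c A2c P2h P2i rP2 A2r[OF assms(1) p1]])
  have ex1: "\<exists>vs. is_onb 4 {v\<in>carrier_vec 4. P1 *\<^sub>v v = v} vs"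
    using onb_exists[OF vs1c P1c QQ1 QP1] by blast
  have ex2: "\<exists>vs. is_onb 4 {v\<in>carrier_vec 4. P2 *\<^sub>v v = v} vs"
    using onb_exists[OF vs2c P2c QQ2 QP2] by blast
  have "jordan_angles 4 (supp (rho1 p)) (supp (rho2 p)) = {arccos (sqrt (Re (1/2)))}"
    unfolding s1 s2
    by (rule jordan_generic[OF P1c P2c P1h P2h P1i P2i P121 P212 ex1 ex2 P1nz P2nz])
  thus "\<exists>\<theta>. jordan_angles 4 (supp (rho1 p)) (supp (rho2 p)) = {\<theta>}" by blast
  show "\<not> essentially_pure 4 {rho1 p, rho2 p}"
  proof
    assume "essentially_pure 4 {rho1 p, rho2 p}"
    then obtain dC dA dB \<sigma> \<omega> U where dims: "4 * dC = dA * dB" and \<sigma>: "density_op dB \<sigma>"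
      and \<omega>: "density_op dC \<omega>" and U: "unitary_op (dA * dB) U"
      and H: "\<forall>\<rho> \<in> {rho1 p, rho2 p}. \<exists>\<phi> \<in> carrier_vec dA. \<phi> \<bullet>c \<phi> = 1 \<and>
            kron \<rho> \<omega> = U * kron (ketbra \<phi>) \<sigma> * mat_adjoint U"
      unfolding essentially_pure_def by blast
    obtain \<phi>1 where \<phi>1: "\<phi>1 \<in> carrier_vec dA" "\<phi>1 \<bullet>c \<phi>1 = 1"
      and e1: "kron (rho1 p) \<omega> = U * kron (ketbra \<phi>1) \<sigma> * mat_adjoint U" using H by blast
    obtain \<phi>2 where \<phi>2: "\<phi>2 \<in> carrier_vec dA"
      and e2: "kron (rho2 p) \<omega> = U * kron (ketbra \<phi>2) \<sigma> * mat_adjoint U" using H by blast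
    define N where "N = dA * dB"
    have Uc: "U \<in> carrier_mat N N" and UU: "mat_adjoint U * U = 1\<^sub>m N"
      using U unfolding unitary_op_def N_def by auto
    have \<sigma>c: "\<sigma> \<in> carrier_mat dB dB" using \<sigma> unfolding density_op_def by auto
    have \<omega>c: "\<omega> \<in> carrier_mat dC dC" and \<omega>h: "mat_adjoint \<omega> = \<omega>" and \<omega>t: "mtrace \<omega> = 1"
      using \<omega> unfolding density_op_def by auto
    have k1: "ketbra \<phi>1 \<in> carrier_mat dA dA" using ketbra_carrier[of \<phi>1] \<phi>1(1) by simp
    have k2: "ketbra \<phi>2 \<in> carrier_mat dA dA" using ketbra_carrier[of \<phi>2] \<phi>2(1) by simp
    define K1 where "K1 = kron (ketbra \<phi>1) \<sigma>"
    define K2 where "K2 = kron (ketbra \<phi>2) \<sigma>"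
    have K1c: "K1 \<in> carrier_mat N N" unfolding K1_def N_def using k1 \<sigma>c by simp
    have K2c: "K2 \<in> carrier_mat N N" unfolding K2_def N_def using k2 \<sigma>c by simp
    define \<sigma>3 where "\<sigma>3 = \<sigma> * \<sigma> * \<sigma>"
    define \<omega>3 where "\<omega>3 = \<omega> * \<omega> * \<omega>"
    define c where "c = (\<phi>2 \<bullet>c \<phi>1) * (\<phi>1 \<bullet>c \<phi>2)"
    have dvA: "dim_vec \<phi>1 = dA" "dim_vec \<phi>2 = dA" using \<phi>1 \<phi>2 by auto
    have "K1 * K2 * K1 = kron (ketbra \<phi>1 * ketbra \<phi>2 * ketbra \<phi>1) \<sigma>3"
      unfolding K1_def K2_def \<sigma>3_def
      using kron_mult[OF k1 \<sigma>c k2 \<sigma>c] kron_mult[OF mult_carrier_mat[OF k1 k2] mult_carrier_mat[OF \<sigma>c \<sigma>c] k1 \<sigma>c]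
      by simp
    also have "\<dots> = c \<cdot>\<^sub>m kron (ketbra \<phi>1) \<sigma>3"
      unfolding c_def ketbra3[OF dvA] kron_smult ..
    finally have KKK: "K1 * K2 * K1 = c \<cdot>\<^sub>m kron (ketbra \<phi>1) \<sigma>3" .
    have "K1 * K1 * K1 = kron (ketbra \<phi>1 * ketbra \<phi>1 * ketbra \<phi>1) \<sigma>3"
      unfolding K1_def \<sigma>3_def
      using kron_mult[OF k1 \<sigma>c k1 \<sigma>c] kron_mult[OF mult_carrier_mat[OF k1 k1] mult_carrier_mat[OF \<sigma>c \<sigma>c] k1 \<sigma>c]
      by simp
    also have "\<dots> = kron (ketbra \<phi>1) \<sigma>3"
      unfolding ketbra3[OF dvA(1) dvA(1)] \<phi>1(2) by (simp add: smult_one_m)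
    finally have K111: "K1 * K1 * K1 = kron (ketbra \<phi>1) \<sigma>3" .
    have K3c: "kron (ketbra \<phi>1) \<sigma>3 \<in> carrier_mat N N"
      unfolding N_def \<sigma>3_def using k1 \<sigma>c by (simp add: mult_carrier_mat)
    have aU: "mat_adjoint U \<in> carrier_mat N N" using Uc by simp
    have X1: "kron (rho1 p) \<omega> = U * K1 * mat_adjoint U" using e1 K1_def by simp
    have X2: "kron (rho2 p) \<omega> = U * K2 * mat_adjoint U" using e2 K2_def by simp
    have "kron (rho1 p) \<omega> * kron (rho2 p) \<omega> * kron (rho1 p) \<omega> = U * (K1 * K2 * K1) * mat_adjoint U"
      unfolding X1 X2 conj_unitary[OF Uc UU K1c K2c] conj_unitary[OF Uc UU mult_carrier_mat[OF K1c K2c] K1c] ..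
    also have "\<dots> = c \<cdot>\<^sub>m (U * kron (ketbra \<phi>1) \<sigma>3 * mat_adjoint U)"
      unfolding KKK using mult_smult_distrib[OF Uc K3c] mult_smult_assoc_mat[OF mult_carrier_mat[OF Uc K3c] aU] by simp
    also have "U * kron (ketbra \<phi>1) \<sigma>3 * mat_adjoint U = kron (rho1 p) \<omega> * kron (rho1 p) \<omega> * kron (rho1 p) \<omega>"
      unfolding X1 conj_unitary[OF Uc UU K1c K1c] conj_unitary[OF Uc UU mult_carrier_mat[OF K1c K1c] K1c] K111 ..
    finally have eq: "kron (rho1 p) \<omega> * kron (rho2 p) \<omega> * kron (rho1 p) \<omega> =
        c \<cdot>\<^sub>m (kron (rho1 p) \<omega> * kron (rho1 p) \<omega> * kron (rho1 p) \<omega>)" .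
    have L: "kron (rho1 p) \<omega> * kron (rho2 p) \<omega> * kron (rho1 p) \<omega> = kron (rho1 p * rho2 p * rho1 p) \<omega>3"
      unfolding \<omega>3_def
      using kron_mult[OF rho1c \<omega>c rho2c \<omega>c] kron_mult[OF mult_carrier_mat[OF rho1c rho2c] mult_carrier_mat[OF \<omega>c \<omega>c] rho1c \<omega>c]
      by simp
    have R: "kron (rho1 p) \<omega> * kron (rho1 p) \<omega> * kron (rho1 p) \<omega> = kron (rho1 p * rho1 p * rho1 p) \<omega>3"
      unfolding \<omega>3_def
      using kron_mult[OF rho1c \<omega>c rho1c \<omega>c] kron_mult[OF mult_carrier_mat[OF rho1c rho1c] mult_carrier_mat[OF \<omega>c \<omega>c] rho1c \<omega>c]
      by simp
    have \<omega>3c: "\<omega>3 \<in> carrier_mat dC dC" unfolding \<omega>3_def using \<omega>c by (simp add: mult_carrier_mat)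
    have \<omega>3nz: "\<omega>3 \<noteq> 0\<^sub>m dC dC"
    proof
      assume z: "\<omega>3 = 0\<^sub>m dC dC"
      have w2c: "\<omega> * \<omega> \<in> carrier_mat dC dC" using \<omega>c by (simp add: mult_carrier_mat)
      have "(\<omega> * \<omega>) * (\<omega> * \<omega>) = \<omega>3 * \<omega>" unfolding \<omega>3_def by (rule assoc_mult_mat[OF w2c \<omega>c \<omega>c, symmetric])
      also have "\<dots> = 0\<^sub>m dC dC" using z \<omega>c by simp
      finally have "(\<omega> * \<omega>) * (\<omega> * \<omega>) = 0\<^sub>m dC dC" .
      moreover have "mat_adjoint (\<omega> * \<omega>) = \<omega> * \<omega>" using adj_mult[OF \<omega>c \<omega>c] \<omega>h by simp
      ultimately have "\<omega> * \<omega> = 0\<^sub>m dC dC" using herm_sq_zero[OF w2c] by blast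
      hence "\<omega> = 0\<^sub>m dC dC" using herm_sq_zero[OF \<omega>c \<omega>h] by blast
      hence "mtrace \<omega> = 0" unfolding mtrace_def by simp
      thus False using \<omega>t by simp
    qed
    obtain a b where ab: "a < dC" "b < dC" "\<omega>3 $$ (a,b) \<noteq> 0"
    proof -
      have "\<exists>a b. a < dC \<and> b < dC \<and> \<omega>3 $$ (a,b) \<noteq> 0"
      proof (rule ccontr)
        assume "\<not> ?thesis"
        hence "\<omega>3 = 0\<^sub>m dC dC" using \<omega>3c by (intro eq_matI) auto
        thus False using \<omega>3nz by simp
      qed
      thus ?thesis using that by blast
    qed
    have dC0: "dC > 0" using ab by simp
    have i: "a < 4 * dC" "dC + b < 4 * dC" using ab by auto
    have dm: "a div dC = 0" "a mod dC = a" "(dC + b) div dC = 1" "(dC + b) mod dC = b" using ab dC0 by auto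
    have dr: "dim_row (rho1 p) = 4" "dim_col (rho1 p) = 4" by (simp_all add: rho1_e)
    have r121c: "rho1 p * rho2 p * rho1 p \<in> carrier_mat 4 4" by simp
    have r111c: "rho1 p * rho1 p * rho1 p \<in> carrier_mat 4 4" by simp
    have "kron (rho1 p * rho2 p * rho1 p) \<omega>3 $$ (a, dC + b) = (rho1 p * rho2 p * rho1 p) $$ (0,1) * \<omega>3 $$ (a,b)"
      using kron_index[of a "rho1 p * rho2 p * rho1 p" \<omega>3 "dC + b"] i dm dr r121c \<omega>3c by simp
    moreover have "(c \<cdot>\<^sub>m kron (rho1 p * rho1 p * rho1 p) \<omega>3) $$ (a, dC + b) = c * ((rho1 p * rho1 p * rho1 p) $$ (0,1) * \<omega>3 $$ (a,b))"
      using kron_index[of a "rho1 p * rho1 p * rho1 p" \<omega>3 "dC + b"] i dm dr r111c \<omega>3c by simp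
    ultimately have "(rho1 p * rho2 p * rho1 p) $$ (0,1) * \<omega>3 $$ (a,b) = 0"
      using eq L R entry111 by simp
    hence "(rho1 p * rho2 p * rho1 p) $$ (0,1) = 0" using ab by simp
    hence "complex_of_real p * complex_of_real (1-p) * (2*complex_of_real p - 1) = 0"
      unfolding entry121 by simp
    moreover have "complex_of_real p \<noteq> 0" "complex_of_real (1-p) \<noteq> 0" "2*complex_of_real p - 1 \<noteq> 0"
    proof -
      show "complex_of_real p \<noteq> 0" "complex_of_real (1-p) \<noteq> 0" using assms by auto
      have "2*complex_of_real p - 1 = complex_of_real (2*p - 1)" by simp
      thus "2*complex_of_real p - 1 \<noteq> 0" using assms by (simp only:) (simp del: of_real_diff)
    qed
    ultimately show False by simp
  qed
qed

end
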